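(* Let $\sigma>0$, $\tau_m>0$, and let $\vec X^m\in\underline{V}^h$ be a parameterization of the polygonal curve network $\Gamma^m$ such that assumptions $(\mathcal A)$, $(\mathcal A_1)$ and $(\mathcal A_2)$ below hold. Let $F^m\in W^h$ be given (in the paper $F^m_i(q^i_j)=\lambda[(u_0(\vec X^m_i(q^i_j))-c^m_{k^+(i)})^2-(u_0(\vec X^m_i(q^i_j))-c^m_{k^-(i)})^2]$, but any element of $W^h$ is allowed). Then there exists a unique pair $(\delta\vec X^{m+1},\kappa_{\mathcal M}^{m+1})\in\underline{V}^h_\Phi\times W^h$ such that $$\Big\langle \tfrac{\delta\vec X^{m+1}}{\tau_m},\,\chi\,\vec\omega^m_{\mathcal M}\Big\rangle^h_m-\sigma\,\langle\kappa^{m+1}_{\mathcal M},\chi\rangle^h_m=\langle F^m,\chi\rangle^h_m\quad\forall\chi\in W^h,$$ $$\langle\kappa^{m+1}_{\mathcal M}\,\vec\omega^m_{\mathcal M},\vec\eta\rangle^h_m+\langle\nabla_s\delta\vec X^{m+1},\nabla_s\vec\eta\rangle_m=-\langle\nabla_s\vec X^m,\nabla_s\vec\eta\rangle_m\quad\forall\vec\eta\in\underline{V}^h_\Phi.$$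
   Context: Let $\Phi\in C^2(\mathbb R^3,\mathbb R)$ and $\mathcal M=\{\vec z:\Phi(\vec z)=0\}$ with $\nabla\Phi\neq0$ on $\mathcal M$; set $\vec n_\Phi=\nabla\Phi/\|\nabla\Phi\|$. Curve network: $N_C$ curves $\Gamma_1,\dots,\Gamma_{N_C}$, each parameterized over $I_i=[0,1]$ with a partition $0=q^i_0<q^i_1<\dots<q^i_{N_i}=1$. A curve is either closed (then $I_i$ is periodic, indices are taken modulo $N_i$, i.e. $N_i\equiv 0$, $N_i+1\equiv1$, $-1\equiv N_i-1$, and $j_0^i:=1$) or open (then $j_0^i:=0$). There are $N_T$ triple junctions; for each $k=1,\dots,N_T$ there are three pairwise distinct curve indices $i_{k,1},i_{k,2},i_{k,3}$ (open curves) and endpoints $\rho_{k,l}\in\{0,1\}$, with node index $j_{k,l}\in\{0,N_{i_{k,l}}\}$ satisfying $q^{i_{k,l}}_{j_{k,l}}=\rho_{k,l}$. Every endpoint of every open curve belongs to some triple junction. Spaces: $W^h$ is the set of $(\eta_1,\dots,\eta_{N_C})$ with $\eta_i\in C(I_i,\mathbb R)$ affine on each $[q^i_{j-1},q^i_j]$. $\underline V^h$ is the set of $(\vec\eta_1,\dots,\vec\eta_{N_C})$ with $\vec\eta_i\in C(I_i,\mathbb R^3)$ affine on each $[q^i_{j-1},q^i_j]$ and $\vec\eta_{i_{k,1}}(\rho_{k,1})=\vec\eta_{i_{k,2}}(\rho_{k,2})=\vec\eta_{i_{k,3}}(\rho_{k,3})$ for all $k$. $\vec X^m=(\vec X^m_1,\dots,\vec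 X^m_{N_C})\in\underline V^h$ is given, with image $\Gamma^m$, and $\nabla\Phi(\vec X^m_i(q^i_j))\ne0$ at all nodes. Inner products: $\langle u,v\rangle_m=\sum_i\int_{I_i}u_i\cdot v_i\,\|(\vec X^m_i)_\rho\|\,d\rho$, and $\nabla_s$ denotes $\partial_\rho/\|(\vec X^m_i)_\rho\|$ (arclength derivative on $\Gamma^m$). With $h^m_{i,j-1/2}=\|\vec X^m_i(q^i_j)-\vec X^m_i(q^i_{j-1})\|$, the mass-lumped product is $\langle u,v\rangle^h_m=\tfrac12\sum_{i=1}^{N_C}\sum_{j=1}^{N_i}h^m_{i,j-1/2}\big[(u_i\cdot v_i)((q^i_j)^-)+(u_i\cdot v_i)((q^i_{j-1})^+)\big]$, one-sided limits. Discrete normals: $\vec\omega^m_{\Phi,i}(q^i_j)=\vec n_\Phi(\vec X^m_i(q^i_j))$; $\vec\omega^m_{d,i}(q^i_j)=\frac{\vec X^m_i(q^i_{j+1})-\vec X^m_i(q^i_{j-1})}{\|\vec X^m_i(q^i_{j+1})-\vec X^m_i(q^i_{j-1})\|}$ for closed curves and for interior nodes of open curves, while for open curves $\vec\omega^m_{d,i}(q^i_0)=\frac{\vec X^m_i(q^i_1)-\vec X^m_i(q^i_0)}{\|\cdot\|}$ and $\vec\omega^m_{d,i}(q^i_{N_i})=\frac{\vec X^m_i(q^i_{N_i})-\vec X^m_i(q^i_{N_i-1})}{\|\cdot\|}$; $\vec\omega^m_{\mathcal M,i}(q^i_j)=\vec\omega^m_{d,i}(q^i_j)\times\vec\omega^m_{\Phi,i}(q^i_j)$;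 these are extended to $I_i$ as piecewise linear interpolants. $\underline V^h_\Phi=\{\vec\eta\in\underline V^h:\vec\eta_i(q^i_j)\cdot\vec\omega^m_{\Phi,i}(q^i_j)=0$ for all $i$ and nodes $j\}$. Assumption $(\mathcal A)$: $h^m_{i,j-1/2}>0$ for all $i$, $j=1,\dots,N_i$, and $\vec X^m_i(q^i_{j+1})\neq\vec X^m_i(q^i_{j-1})$ for $j=1,\dots,N_i$ if $\Gamma_i$ is closed and for $j=1,\dots,N_i-1$ if $\Gamma_i$ is open. Assumption $(\mathcal A_1)$: for every closed curve $\Gamma_i$, $\dim\operatorname{span}\{\vec\omega^m_{\mathcal M,i}(q^i_j),\vec\omega^m_{\Phi,i}(q^i_j)\}_{j=1}^{N_i}=3$. Assumption $(\mathcal A_2)$: for every triple junction $k$, $\dim\operatorname{span}\bigcup_{l=1}^3\{\vec\omega^m_{\mathcal M,i_{k,l}}(q^{i_{k,l}}_j),\vec\omega^m_{\Phi,i_{k,l}}(q^{i_{k,l}}_j)\}_{j=1}^{N_{i_{k,l}}-1}=3$. *)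

theory Defs
  imports "HOL-Analysis.Analysis" "HOL-Analysis.Cross3"
begin

(* Curves are indexed by i < NC; curve i has N i intervals, partition q i 0 < ... < q i (N i),
   clsd i says whether curve i is closed.  A scalar network function is nat => real => real,
   a vector network function nat => real => real^3, where component i is the function on
   I_i = [0,1].  Elements of W^h / V^h are normalised to be 0 for i >= NC and for rho outside [0,1]
   (so that uniqueness is meaningful).
   Triple junctions k < NT: curve indices ic k l and endpoints rh k l (l < 3). *)

definition node_idx :: "nat \<Rightarrow> real \<Rightarrow> nat" where
  "node_idx Ni r = (if r = 0 then 0 else Ni)"

definition network :: "nat \<Rightarrow> (nat \<Rightarrow> nat) \<Rightarrow> (nat \<Rightarrow> nat \<Rightarrow> real) \<Rightarrow> (nat \<Rightarrow> bool)
    \<Rightarrow> nat \<Rightarrow> (nat \<Rightarrow> nat \<Rightarrow> nat) \<Rightarrow> (nat \<Rightarrow> nat \<Rightarrow> real) \<Rightarrow> bool" where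
  "network NC N q clsd NT ic rh \<longleftrightarrow>
     (\<forall>i<NC. N i \<ge> 1 \<and> q i 0 = 0 \<and> q i (N i) = 1 \<and> (\<forall>j<N i. q i j < q i (Suc j))) \<and>
     (\<forall>k<NT. (\<forall>l<3. ic k l < NC \<and> \<not> clsd (ic k l) \<and> rh k l \<in> {0, 1}) \<and>
              ic k 0 \<noteq> ic k 1 \<and> ic k 0 \<noteq> ic k 2 \<and> ic k 1 \<noteq> ic k 2) \<and>
     (\<forall>i<NC. \<not> clsd i \<longrightarrow> (\<forall>r\<in>{0::real, 1}. \<exists>k<NT. \<exists>l<3. ic k l = i \<and> rh k l = r))"

definition pw_affine :: "(nat \<Rightarrow> real) \<Rightarrow> nat \<Rightarrow> bool \<Rightarrow> (real \<Rightarrow> 'v::real_normed_vector) \<Rightarrow> bool" where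
  "pw_affine qi Ni cl f \<longleftrightarrow>
     continuous_on {0..1} f \<and> (cl \<longrightarrow> f 0 = f 1) \<and>
     (\<forall>j\<in>{1..Ni}. \<exists>a b. \<forall>r\<in>{qi (j - 1)..qi j}. f r = a + r *\<^sub>R b)"

definition extensional_net :: "nat \<Rightarrow> (nat \<Rightarrow> real \<Rightarrow> 'v::zero) \<Rightarrow> bool" where
  "extensional_net NC u \<longleftrightarrow> (\<forall>i r. (i \<ge> NC \<or> r \<notin> {0..1}) \<longrightarrow> u i r = 0)"

definition Wh :: "nat \<Rightarrow> (nat \<Rightarrow> nat) \<Rightarrow> (nat \<Rightarrow> nat \<Rightarrow> real) \<Rightarrow> (nat \<Rightarrow> bool)
    \<Rightarrow> (nat \<Rightarrow> real \<Rightarrow> real) set" where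
  "Wh NC N q clsd = {u. extensional_net NC u \<and> (\<forall>i<NC. pw_affine (q i) (N i) (clsd i) (u i))}"

definition Vh :: "nat \<Rightarrow> (nat \<Rightarrow> nat) \<Rightarrow> (nat \<Rightarrow> nat \<Rightarrow> real) \<Rightarrow> (nat \<Rightarrow> bool)
    \<Rightarrow> nat \<Rightarrow> (nat \<Rightarrow> nat \<Rightarrow> nat) \<Rightarrow> (nat \<Rightarrow> nat \<Rightarrow> real) \<Rightarrow> (nat \<Rightarrow> real \<Rightarrow> real^3) set" where
  "Vh NC N q clsd NT ic rh = {u. extensional_net NC u \<and>
     (\<forall>i<NC. pw_affine (q i) (N i) (clsd i) (u i)) \<and>
     (\<forall>k<NT. u (ic k 0) (rh k 0) = u (ic k 1) (rh k 1) \<and> u (ic k 1) (rh k 1) = u (ic k 2) (rh k 2))}"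

definition nxt :: "nat \<Rightarrow> bool \<Rightarrow> nat \<Rightarrow> nat" where
  "nxt Ni cl j = (if cl \<and> j = Ni then 1 else j + 1)"
definition prv :: "nat \<Rightarrow> bool \<Rightarrow> nat \<Rightarrow> nat" where
  "prv Ni cl j = (if cl \<and> j = 0 then Ni - 1 else j - 1)"

definition omega_d :: "(nat \<Rightarrow> nat) \<Rightarrow> (nat \<Rightarrow> nat \<Rightarrow> real) \<Rightarrow> (nat \<Rightarrow> bool)
    \<Rightarrow> (nat \<Rightarrow> real \<Rightarrow> real^3) \<Rightarrow> nat \<Rightarrow> nat \<Rightarrow> real^3" where
  "omega_d N q clsd X i j =
     (let P = (\<lambda>j. X i (q i j)) in
      if clsd i \<or> (0 < j \<and> j < N i) then
        (P (nxt (N i) (clsd i) j) - P (prv (N i) (clsd i) j)) /\<^sub>R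
          norm (P (nxt (N i) (clsd i) j) - P (prv (N i) (clsd i) j))
      else if j = 0 then (P 1 - P 0) /\<^sub>R norm (P 1 - P 0)
      else (P (N i) - P (N i - 1)) /\<^sub>R norm (P (N i) - P (N i - 1)))"

definition n_Phi :: "(real^3 \<Rightarrow> real^3) \<Rightarrow> real^3 \<Rightarrow> real^3" where
  "n_Phi gPhi z = gPhi z /\<^sub>R norm (gPhi z)"

definition omega_Phi :: "(real^3 \<Rightarrow> real^3) \<Rightarrow> (nat \<Rightarrow> nat \<Rightarrow> real)
    \<Rightarrow> (nat \<Rightarrow> real \<Rightarrow> real^3) \<Rightarrow> nat \<Rightarrow> nat \<Rightarrow> real^3" where
  "omega_Phi gPhi q X i j = n_Phi gPhi (X i (q i j))"

definition omega_M :: "(real^3 \<Rightarrow> real^3) \<Rightarrow> (nat \<Rightarrow> nat) \<Rightarrow> (nat \<Rightarrow> nat \<Rightarrow> real) \<Rightarrow> (nat \<Rightarrow> bool)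
    \<Rightarrow> (nat \<Rightarrow> real \<Rightarrow> real^3) \<Rightarrow> nat \<Rightarrow> nat \<Rightarrow> real^3" where
  "omega_M gPhi N q clsd X i j = cross3 (omega_d N q clsd X i j) (omega_Phi gPhi q X i j)"

definition pl_interp :: "(nat \<Rightarrow> real) \<Rightarrow> nat \<Rightarrow> (nat \<Rightarrow> 'v::real_vector) \<Rightarrow> real \<Rightarrow> 'v" where
  "pl_interp qi Ni a r =
     (if r \<le> qi 0 then a 0
      else if r > qi Ni then a Ni
      else (let j = (LEAST j. r \<le> qi j) in
            ((qi j - r) / (qi j - qi (j - 1))) *\<^sub>R a (j - 1) +
            ((r - qi (j - 1)) / (qi j - qi (j - 1))) *\<^sub>R a j))"

definition omega_M_fun :: "(real^3 \<Rightarrow> real^3) \<Rightarrow> (nat \<Rightarrow> nat) \<Rightarrow> (nat \<Rightarrow> nat \<Rightarrow> real) \<Rightarrow> (nat \<Rightarrow> bool)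
    \<Rightarrow> (nat \<Rightarrow> real \<Rightarrow> real^3) \<Rightarrow> nat \<Rightarrow> real \<Rightarrow> real^3" where
  "omega_M_fun gPhi N q clsd X i = pl_interp (q i) (N i) (omega_M gPhi N q clsd X i)"

definition V_Phi :: "(real^3 \<Rightarrow> real^3) \<Rightarrow> nat \<Rightarrow> (nat \<Rightarrow> nat) \<Rightarrow> (nat \<Rightarrow> nat \<Rightarrow> real) \<Rightarrow> (nat \<Rightarrow> bool)
    \<Rightarrow> nat \<Rightarrow> (nat \<Rightarrow> nat \<Rightarrow> nat) \<Rightarrow> (nat \<Rightarrow> nat \<Rightarrow> real) \<Rightarrow> (nat \<Rightarrow> real \<Rightarrow> real^3)
    \<Rightarrow> (nat \<Rightarrow> real \<Rightarrow> real^3) set" where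
  "V_Phi gPhi NC N q clsd NT ic rh X = {u \<in> Vh NC N q clsd NT ic rh.
      \<forall>i<NC. \<forall>j\<le>N i. u i (q i j) \<bullet> omega_Phi gPhi q X i j = 0}"

(* mass-lumped inner product; the argument f i r is the pointwise product (u_i . v_i)(r).
   All functions it is applied to are continuous, so one-sided limits equal nodal values. *)
definition lumped :: "nat \<Rightarrow> (nat \<Rightarrow> nat) \<Rightarrow> (nat \<Rightarrow> nat \<Rightarrow> real) \<Rightarrow> (nat \<Rightarrow> real \<Rightarrow> real^3)
    \<Rightarrow> (nat \<Rightarrow> real \<Rightarrow> real) \<Rightarrow> real" where
  "lumped NC N q X f = (1/2) * (\<Sum>i<NC. \<Sum>j\<in>{1..N i}.
      norm (X i (q i j) - X i (q i (j - 1))) * (f i (q i j) + f i (q i (j - 1))))"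

definition nabla_s :: "(nat \<Rightarrow> real \<Rightarrow> real^3) \<Rightarrow> (nat \<Rightarrow> real \<Rightarrow> real^3) \<Rightarrow> nat \<Rightarrow> real \<Rightarrow> real^3" where
  "nabla_s X u i r = vector_derivative (u i) (at r) /\<^sub>R norm (vector_derivative (X i) (at r))"

definition l2m :: "nat \<Rightarrow> (nat \<Rightarrow> real \<Rightarrow> real^3) \<Rightarrow> (nat \<Rightarrow> real \<Rightarrow> real^3)
    \<Rightarrow> (nat \<Rightarrow> real \<Rightarrow> real^3) \<Rightarrow> real" where
  "l2m NC X u v = (\<Sum>i<NC. integral {0..1} (\<lambda>r. (u i r \<bullet> v i r) * norm (vector_derivative (X i) (at r))))"

definition assm_A :: "nat \<Rightarrow> (nat \<Rightarrow> nat) \<Rightarrow> (nat \<Rightarrow> nat \<Rightarrow> real) \<Rightarrow> (nat \<Rightarrow> bool)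
    \<Rightarrow> (nat \<Rightarrow> real \<Rightarrow> real^3) \<Rightarrow> bool" where
  "assm_A NC N q clsd X \<longleftrightarrow> (\<forall>i<NC.
     (\<forall>j\<in>{1..N i}. norm (X i (q i j) - X i (q i (j - 1))) > 0) \<and>
     (\<forall>j\<in>(if clsd i then {1..N i} else {1..<N i}).
        X i (q i (nxt (N i) (clsd i) j)) \<noteq> X i (q i (prv (N i) (clsd i) j))))"

definition assm_A1 :: "(real^3 \<Rightarrow> real^3) \<Rightarrow> nat \<Rightarrow> (nat \<Rightarrow> nat) \<Rightarrow> (nat \<Rightarrow> nat \<Rightarrow> real)
    \<Rightarrow> (nat \<Rightarrow> bool) \<Rightarrow> (nat \<Rightarrow> real \<Rightarrow> real^3) \<Rightarrow> bool" where
  "assm_A1 gPhi NC N q clsd X \<longleftrightarrow> (\<forall>i<NC. clsd i \<longrightarrow>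
     dim (span ((\<Union>j\<in>{1..N i}. {omega_M gPhi N q clsd X i j, omega_Phi gPhi q X i j}))) = 3)"

definition assm_A2 :: "(real^3 \<Rightarrow> real^3) \<Rightarrow> (nat \<Rightarrow> nat) \<Rightarrow> (nat \<Rightarrow> nat \<Rightarrow> real)
    \<Rightarrow> (nat \<Rightarrow> bool) \<Rightarrow> nat \<Rightarrow> (nat \<Rightarrow> nat \<Rightarrow> nat) \<Rightarrow> (nat \<Rightarrow> real \<Rightarrow> real^3) \<Rightarrow> bool" where
  "assm_A2 gPhi N q clsd NT ic X \<longleftrightarrow> (\<forall>k<NT.
     dim (span (\<Union>l<3. \<Union>j\<in>{1..<N (ic k l)}.
        {omega_M gPhi N q clsd X (ic k l) j, omega_Phi gPhi q X (ic k l) j})) = 3)"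

end

theory Submission
  imports Defs "HOL-Library.Function_Algebras"
begin

instantiation "fun" :: (type, real_vector) real_vector
begin
definition scaleR_fun :: "real \<Rightarrow> ('a \<Rightarrow> 'b) \<Rightarrow> 'a \<Rightarrow> 'b" where
  "scaleR_fun c f = (\<lambda>x. c *\<^sub>R f x)"
instance by standard (auto simp: scaleR_fun_def fun_eq_iff scaleR_add_right scaleR_add_left)
end

lemma scaleR_fun_apply[simp]: "(c *\<^sub>R f) x = c *\<^sub>R f x" by (simp add: scaleR_fun_def)

lemma sum_fun_apply: "(\<Sum>s\<in>A. f s) x = (\<Sum>s\<in>A. f s x)"
  by (induction A rule: infinite_finite_induct) (auto simp: func_plus func_zero)

lemma lin_fun_test: "linear (\<lambda>f::nat\<Rightarrow>real. f 3)"
  by (auto intro!: linearI)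

lemma subspace_eq_lin:
  fixes f g :: "'a::real_vector \<Rightarrow> real"
  assumes "linear f" "linear g"
  shows "subspace {v. f v = g v}"
  using assms unfolding subspace_def by (auto simp: linear_add linear_scale linear_0)

lemma abstract_solve:
  fixes B :: "'a::real_vector \<Rightarrow> 'a \<Rightarrow> real" and E :: "'a \<Rightarrow> 'b::real_vector"
    and l :: "'a \<Rightarrow> real"
  assumes U: "subspace U"
    and E: "linear E" "finite H" "E ` U \<subseteq> span H" and E0: "\<And>u. u\<in>U \<Longrightarrow> E u = 0 \<Longrightarrow> u = 0"
    and B1: "\<And>v. linear (\<lambda>u. B u v)" and B2: "\<And>u. linear (B u)" and l: "linear l"
    and nd: "\<And>u. u\<in>U \<Longrightarrow> \<forall>v\<in>U. B u v = 0 \<Longrightarrow> u = 0"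
  shows "\<exists>!u. u\<in>U \<and> (\<forall>v\<in>U. B u v = l v)"
proof -
  obtain S where S: "S \<subseteq> U" "independent S" "U \<subseteq> span S"
    using basis_exists[of U] by metis
  have spanS: "span S = U"
    by (rule subset_antisym[OF span_minimal[OF S(1) U] S(3)])
  have injE: "inj_on E (span S)"
  proof (rule inj_onI)
    fix x y assume xy: "x \<in> span S" "y \<in> span S" "E x = E y"
    then have "x - y \<in> U" using spanS U by (simp add: subspace_diff)
    moreover have "E (x - y) = 0" using xy E(1) by (simp add: linear_diff)
    ultimately show "x = y" using E0 by (metis eq_iff_diff_eq_0)
  qed
  have "independent (E ` S)"
    using linear_independent_injective_image[OF E(1) S(2) injE] .
  moreover have "E ` S \<subseteq> span H" using S E(3) by auto
  ultimately have "finite (E ` S)" using independent_span_bound[OF E(2)] by blast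
  moreover have "inj_on E S" using injE span_superset inj_on_subset by blast
  ultimately have finS: "finite S" using finite_imageD by blast
  define G where "G u = (\<lambda>s. if s \<in> S then B u s else 0)" for u
  define del where "del s = (\<lambda>s'. if s' = s then 1 else (0::real))" for s :: 'a
  have linG: "linear G"
    unfolding G_def
    by (rule linearI) (auto simp: fun_eq_iff linear_add[OF B1] linear_scale[OF B1] func_plus)
  have Bspan: "B u v = 0" if "u \<in> U" "\<forall>s\<in>S. B u s = 0" "v \<in> U" for u v
  proof -
    have "subspace {v. B u v = (\<lambda>_. 0) v}"
      by (rule subspace_eq_lin[OF B2]) (simp add: linear_zero)
    then have "span S \<subseteq> {v. B u v = 0}"
      using that(2) by (intro span_minimal) auto
    then show ?thesis using that spanS by auto
  qed
  have injG: "inj_on G (span S)"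
  proof (rule inj_onI)
    fix x y assume xy: "x \<in> span S" "y \<in> span S" "G x = G y"
    then have xyU: "x - y \<in> U" using spanS U by (simp add: subspace_diff)
    have "G (x - y) = 0" using xy linG by (simp add: linear_diff)
    then have "\<forall>s\<in>S. B (x - y) s = 0" unfolding G_def by (auto simp: fun_eq_iff func_zero split: if_splits)
    then have "\<forall>v\<in>U. B (x - y) v = 0" using Bspan xyU by blast
    then show "x = y" using nd xyU by (metis eq_iff_diff_eq_0)
  qed
  define T where "T = G ` S"
  have indT: "independent T" unfolding T_def
    using linear_independent_injective_image[OF linG S(2) injG] .
  have cardT: "card T = card S" unfolding T_def
    using injG span_superset inj_on_subset card_image by metis
  define D where "D = del ` S"
  have finD: "finite D" "card D \<le> card S" unfolding D_def using finS by (auto intro: card_image_le)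
  have Gsum: "G u = (\<Sum>s\<in>S. B u s *\<^sub>R del s)" for u
    by (rule ext) (simp add: G_def del_def finS sum_fun_apply if_distrib cong: if_cong)
  have TD: "T \<subseteq> span D"
  proof
    fix t assume "t \<in> T"
    then obtain u where tu: "t = G u" unfolding T_def by auto
    show "t \<in> span D" unfolding tu Gsum D_def
      by (intro span_sum span_scale span_base) auto
  qed
  have DT: "D \<subseteq> span T"
  proof (rule ccontr)
    assume "\<not> D \<subseteq> span T"
    then obtain d where d: "d \<in> D" "d \<notin> span T" by auto
    have "independent (insert d T)" using indT d(2) by (simp add: independent_insert)
    moreover have "insert d T \<subseteq> span D" using TD d(1) span_superset by blast
    ultimately have "card (insert d T) \<le> card D" using independent_span_bound[OF finD(1)] by blast
    moreover have "finite T" unfolding T_def using finS by simp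
    ultimately show False using d(2) span_superset[of T] cardT finD(2) by (auto simp: card_insert_if split: if_splits)
  qed
  define z where "z = (\<Sum>s\<in>S. l s *\<^sub>R del s)"
  have "z \<in> span D" unfolding z_def D_def by (intro span_sum span_scale span_base) auto
  then have "z \<in> span T" using DT by (metis span_mono span_span subsetD)
  then have "z \<in> G ` span S" unfolding T_def using span_linear_image[OF linG] by blast
  then obtain u where u: "u \<in> U" "G u = z" using spanS by auto
  have "B u s = l s" if "s \<in> S" for s
  proof -
    have "G u s = z s" using u by simp
    then show ?thesis using that finS unfolding G_def z_def del_def
      by (simp add: sum_fun_apply if_distrib cong: if_cong)
  qed
  then have sol: "\<forall>v\<in>U. B u v = l v"
    using span_minimal[OF _ subspace_eq_lin[OF B2 l], of S] spanS by auto
  show ?thesis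
  proof (rule ex1I[of _ u])
    show "u \<in> U \<and> (\<forall>v\<in>U. B u v = l v)" using u sol by auto
  next
    fix u' assume u': "u' \<in> U \<and> (\<forall>v\<in>U. B u' v = l v)"
    have "u' - u \<in> U" using u' u U by (simp add: subspace_diff)
    moreover have "\<forall>v\<in>U. B (u' - u) v = 0" using u' sol by (simp add: linear_diff[OF B1])
    ultimately show "u' = u" using nd by (metis eq_iff_diff_eq_0)
  qed
qed

definition part :: "(nat \<Rightarrow> real) \<Rightarrow> nat \<Rightarrow> bool" where
  "part qi Ni \<longleftrightarrow> Ni \<ge> 1 \<and> qi 0 = 0 \<and> qi Ni = 1 \<and> (\<forall>j<Ni. qi j < qi (Suc j))"

lemma part_less: assumes "part qi Ni" "j < k" "k \<le> Ni" shows "qi j < qi k"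
  using assms(2,3)
proof (induction k)
  case 0 then show ?case by simp
next
  case (Suc k)
  have "qi k < qi (Suc k)" using assms(1) Suc.prems unfolding part_def by auto
  then show ?case using Suc by (cases "j = k") auto
qed

lemma part_le: assumes "part qi Ni" "j \<le> k" "k \<le> Ni" shows "qi j \<le> qi k"
  using part_less[OF assms(1)] assms(2,3) by (cases "j = k") (auto simp: order.order_iff_strict)

lemma part_01: assumes "part qi Ni" "j \<le> Ni" shows "0 \<le> qi j" "qi j \<le> 1"
  using part_le[OF assms(1), of 0 j] part_le[OF assms(1), of j Ni] assms unfolding part_def by auto

lemma part_cover: assumes "part qi Ni" "r \<in> {0..1}"
  shows "\<exists>j\<in>{1..Ni}. r \<in> {qi (j - 1)..qi j}"
proof -
  have "\<exists>j\<le>Ni. r \<le> qi j" using assms unfolding part_def by auto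
  define j where "j = (LEAST j. r \<le> qi j)"
  have jr: "r \<le> qi j" unfolding j_def using \<open>\<exists>j\<le>Ni. r \<le> qi j\<close> by (meson LeastI)
  have jN: "j \<le> Ni" unfolding j_def using \<open>\<exists>j\<le>Ni. r \<le> qi j\<close> by (meson Least_le order_trans)
  show ?thesis
  proof (cases "j = 0")
    case True
    then have "r = 0" using jr assms unfolding part_def by auto
    then show ?thesis using assms(1) part_01[OF assms(1)] unfolding part_def
      by (intro bexI[of _ 1]) auto
  next
    case False
    have "\<not> r \<le> qi (j - 1)" unfolding j_def
      using False j_def not_less_Least[of "j - 1" "\<lambda>j. r \<le> qi j"] by auto
    then show ?thesis using False jr jN by (intro bexI[of _ j]) auto
  qed
qed

lemma pw_affine_seg:
  fixes f :: "real \<Rightarrow> 'v::real_normed_vector"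
  assumes "part qi Ni" "pw_affine qi Ni cl f" "j \<in> {1..Ni}" "r \<in> {qi (j - 1)..qi j}"
  shows "f r = f (qi (j - 1)) + ((r - qi (j - 1)) / (qi j - qi (j - 1))) *\<^sub>R (f (qi j) - f (qi (j - 1)))"
proof -
  obtain a b where ab: "\<forall>r\<in>{qi (j - 1)..qi j}. f r = a + r *\<^sub>R b"
    using assms(2,3) unfolding pw_affine_def by blast
  have lt: "qi (j - 1) < qi j" using part_less[OF assms(1), of "j - 1" j] assms(3) by auto
  have e1: "f (qi (j - 1)) = a + qi (j - 1) *\<^sub>R b" "f (qi j) = a + qi j *\<^sub>R b" "f r = a + r *\<^sub>R b"
    using ab assms(4) lt by auto
  have "f (qi j) - f (qi (j - 1)) = (qi j - qi (j - 1)) *\<^sub>R b" using e1 by (simp add: algebra_simps)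
  then have "((r - qi (j - 1)) / (qi j - qi (j - 1))) *\<^sub>R (f (qi j) - f (qi (j - 1))) = (r - qi (j - 1)) *\<^sub>R b"
    using lt by simp
  then show ?thesis using e1 by (simp add: algebra_simps)
qed

lemma pw_affine_zero:
  fixes f :: "real \<Rightarrow> 'v::real_normed_vector"
  assumes "part qi Ni" "pw_affine qi Ni cl f" "\<forall>j\<le>Ni. f (qi j) = 0" "r \<in> {0..1}"
  shows "f r = 0"
proof -
  obtain j where j: "j \<in> {1..Ni}" "r \<in> {qi (j - 1)..qi j}" using part_cover[OF assms(1,4)] by blast
  show ?thesis using pw_affine_seg[OF assms(1,2) j] assms(3) j by auto
qed

lemma pl_interp_Q:
  assumes "part qi Ni" "j \<in> {1..Ni}" "qi (j - 1) < r" "r \<le> qi j"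
  shows "pl_interp qi Ni a r = ((qi j - r) / (qi j - qi (j - 1))) *\<^sub>R a (j - 1) +
            ((r - qi (j - 1)) / (qi j - qi (j - 1))) *\<^sub>R a j"
proof -
  have L: "(LEAST k. r \<le> qi k) = j"
  proof (rule Least_equality)
    show "r \<le> qi j" by fact
    fix k assume "r \<le> qi k"
    show "j \<le> k"
    proof (rule ccontr)
      assume "\<not> j \<le> k"
      then have "qi k \<le> qi (j - 1)" using part_le[OF assms(1), of k "j - 1"] assms(2) by auto
      then show False using \<open>r \<le> qi k\<close> assms(3) by auto
    qed
  qed
  have "qi 0 \<le> qi (j - 1)" using part_le[OF assms(1), of 0 "j - 1"] assms(2) by auto
  moreover have "qi j \<le> qi Ni" using part_le[OF assms(1), of j Ni] assms(2) by auto
  ultimately show ?thesis using assms(3,4) L unfolding pl_interp_def Let_def by auto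
qed

lemma pl_interp_node:
  assumes "part qi Ni" "j \<le> Ni"
  shows "pl_interp qi Ni a (qi j) = a j"
proof (cases "j = 0")
  case True then show ?thesis unfolding pl_interp_def by simp
next
  case False
  have lt: "qi (j - 1) < qi j" using part_less[OF assms(1), of "j - 1" j] assms False by auto
  show ?thesis using pl_interp_Q[OF assms(1), of j "qi j" a] assms False lt by auto
qed

lemma pl_interp_seg:
  assumes "part qi Ni" "j \<in> {1..Ni}" "r \<in> {qi (j - 1)..qi j}"
  shows "pl_interp qi Ni a r = ((qi j - r) / (qi j - qi (j - 1))) *\<^sub>R a (j - 1) +
            ((r - qi (j - 1)) / (qi j - qi (j - 1))) *\<^sub>R a j"
proof (cases "r = qi (j - 1)")
  case True
  have lt: "qi (j - 1) < qi j" using part_less[OF assms(1), of "j - 1" j] assms by auto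
  show ?thesis using True pl_interp_node[OF assms(1), of "j - 1" a] assms lt by auto
next
  case False
  then have lt: "qi (j - 1) < r" using assms(3) by auto
  show ?thesis using pl_interp_Q[OF assms(1,2) lt] assms(3) by auto
qed

lemma pl_interp_pw_affine:
  fixes a :: "nat \<Rightarrow> 'v::real_normed_vector"
  assumes "part qi Ni" "cl \<longrightarrow> a 0 = a Ni"
  shows "pw_affine qi Ni cl (pl_interp qi Ni a)"
proof -
  define A where "A j = (qi j / (qi j - qi (j - 1))) *\<^sub>R a (j - 1) - (qi (j - 1) / (qi j - qi (j - 1))) *\<^sub>R a j" for j
  define B where "B j = (1 / (qi j - qi (j - 1))) *\<^sub>R (a j - a (j - 1))" for j
  have aff: "pl_interp qi Ni a r = A j + r *\<^sub>R B j" if "j \<in> {1..Ni}" "r \<in> {qi (j - 1)..qi j}" for j r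
  proof -
    have lt: "qi (j - 1) < qi j" using part_less[OF assms(1), of "j - 1" j] that by auto
    show ?thesis unfolding pl_interp_seg[OF assms(1) that] A_def B_def using lt
      by (simp add: algebra_simps diff_divide_distrib scaleR_diff_right scaleR_diff_left)
  qed
  have U: "(\<Union>j\<in>{1..Ni}. {qi (j - 1)..qi j}) = {0..1}"
  proof
    show "(\<Union>j\<in>{1..Ni}. {qi (j - 1)..qi j}) \<subseteq> {0..1}"
    proof
      fix x assume "x \<in> (\<Union>j\<in>{1..Ni}. {qi (j - 1)..qi j})"
      then obtain j where "j \<in> {1..Ni}" "x \<in> {qi (j - 1)..qi j}" by blast
      moreover have "0 \<le> qi (j - 1)" "qi j \<le> 1" using part_01[OF assms(1)] \<open>j \<in> {1..Ni}\<close> by auto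
      ultimately show "x \<in> {0..1}" by auto
    qed
    show "{0..1} \<subseteq> (\<Union>j\<in>{1..Ni}. {qi (j - 1)..qi j})"
      using part_cover[OF assms(1)] by blast
  qed
  have "continuous_on (\<Union>j\<in>{1..Ni}. {qi (j - 1)..qi j}) (pl_interp qi Ni a)"
    by (rule continuous_on_closed_Union)
       (auto intro!: continuous_on_eq[OF _ aff[symmetric]] continuous_intros)
  then have "continuous_on {0..1} (pl_interp qi Ni a)" using U by simp
  moreover have "pl_interp qi Ni a 0 = a 0" "pl_interp qi Ni a 1 = a Ni"
    using pl_interp_node[OF assms(1), of 0 a] pl_interp_node[OF assms(1), of Ni a] assms(1)
    unfolding part_def by auto
  ultimately show ?thesis unfolding pw_affine_def using assms(2) aff by metis
qed

lemma vd_seg: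
  fixes f :: "real \<Rightarrow> 'v::real_normed_vector"
  assumes "part qi Ni" "pw_affine qi Ni cl f" "j \<in> {1..Ni}" "qi (j - 1) < r" "r < qi j"
  shows "vector_derivative f (at r) = (1 / (qi j - qi (j - 1))) *\<^sub>R (f (qi j) - f (qi (j - 1)))"
proof -
  define d where "d = qi j - qi (j - 1)"
  define g where "g r' = f (qi (j - 1)) + ((r' - qi (j - 1)) / d) *\<^sub>R (f (qi j) - f (qi (j - 1)))" for r'
  have "(g has_vector_derivative ((1 / d) *\<^sub>R (f (qi j) - f (qi (j - 1))))) (at r)"
    unfolding g_def
    by (auto intro!: derivative_eq_intros simp: divide_inverse)
  then have "(f has_vector_derivative ((1 / d) *\<^sub>R (f (qi j) - f (qi (j - 1))))) (at r)"
  proof (rule has_vector_derivative_transform_within_open[where S="{qi (j - 1)<..<qi j}"])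
    show "open {qi (j - 1)<..<qi j}" by simp
    show "r \<in> {qi (j - 1)<..<qi j}" using assms by simp
    fix y assume "y \<in> {qi (j - 1)<..<qi j}"
    then show "g y = f y" unfolding g_def d_def using pw_affine_seg[OF assms(1-3), of y] by auto
  qed
  then show ?thesis unfolding d_def by (rule vector_derivative_at)
qed

lemma seg_has_integral:
  fixes u v x :: "real \<Rightarrow> real^3"
  assumes P: "part qi Ni" and pu: "pw_affine qi Ni cu u" and pv: "pw_affine qi Ni cv v"
    and px: "pw_affine qi Ni cx x"
    and h: "\<forall>j\<in>{1..Ni}. norm (x (qi j) - x (qi (j - 1))) > 0"
    and j: "j \<in> {1..Ni}"
  shows "((\<lambda>r. ((vector_derivative u (at r) /\<^sub>R norm (vector_derivative x (at r))) \<bullet>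
                 (vector_derivative v (at r) /\<^sub>R norm (vector_derivative x (at r)))) *
                 norm (vector_derivative x (at r)))
          has_integral ((u (qi j) - u (qi (j - 1))) \<bullet> (v (qi j) - v (qi (j - 1)))) /
              norm (x (qi j) - x (qi (j - 1)))) {qi (j - 1)..qi j}"
proof -
  define d where "d = qi j - qi (j - 1)"
  have d: "d > 0" unfolding d_def using part_less[OF P, of "j - 1" j] j by auto
  define hh where "hh = norm (x (qi j) - x (qi (j - 1)))"
  have hh: "hh > 0" unfolding hh_def using h j by auto
  define c where "c = ((u (qi j) - u (qi (j - 1))) \<bullet> (v (qi j) - v (qi (j - 1)))) / (hh * d)"
  have "((\<lambda>r. c) has_integral (d * c)) {qi (j - 1)..qi j}"
    using has_integral_const_real[of c "qi (j - 1)" "qi j"] d unfolding d_def by simp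
  moreover have "d * c = ((u (qi j) - u (qi (j - 1))) \<bullet> (v (qi j) - v (qi (j - 1)))) / hh"
    using d hh unfolding c_def by simp
  ultimately have I: "((\<lambda>r. c) has_integral ((u (qi j) - u (qi (j - 1))) \<bullet> (v (qi j) - v (qi (j - 1)))) / hh) {qi (j - 1)..qi j}"
    by simp
  show ?thesis unfolding hh_def[symmetric]
  proof (rule has_integral_spike_finite[OF _ _ I, of "{qi (j - 1), qi j}"])
    show "finite {qi (j - 1), qi j}" by simp
    fix r assume r: "r \<in> {qi (j - 1)..qi j} - {qi (j - 1), qi j}"
    then have r1: "qi (j - 1) < r" "r < qi j" by auto
    have du: "vector_derivative u (at r) = (1 / d) *\<^sub>R (u (qi j) - u (qi (j - 1)))"
      using vd_seg[OF P pu j r1] unfolding d_def .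
    have dv: "vector_derivative v (at r) = (1 / d) *\<^sub>R (v (qi j) - v (qi (j - 1)))"
      using vd_seg[OF P pv j r1] unfolding d_def .
    have dx: "norm (vector_derivative x (at r)) = hh / d"
      using vd_seg[OF P px j r1] d unfolding d_def[symmetric] hh_def by simp
    show "((vector_derivative u (at r) /\<^sub>R norm (vector_derivative x (at r))) \<bullet>
                 (vector_derivative v (at r) /\<^sub>R norm (vector_derivative x (at r)))) *
                 norm (vector_derivative x (at r)) = c"
    proof -
      have key: "(((1 / d) *\<^sub>R a /\<^sub>R (hh / d)) \<bullet> ((1 / d) *\<^sub>R b /\<^sub>R (hh / d))) * (hh / d) = (a \<bullet> b) / (hh * d)"
        for a b :: "real^3"
        using d hh by (simp add: inner_scaleR_left inner_scaleR_right field_simps power2_eq_square)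
      show ?thesis unfolding du dv dx c_def by (rule key)
    qed
  qed
qed

lemma curve_integral:
  fixes u v x :: "real \<Rightarrow> real^3"
  assumes P: "part qi Ni" and pu: "pw_affine qi Ni cu u" and pv: "pw_affine qi Ni cv v"
    and px: "pw_affine qi Ni cx x"
    and h: "\<forall>j\<in>{1..Ni}. norm (x (qi j) - x (qi (j - 1))) > 0"
  shows "integral {0..1} (\<lambda>r. ((vector_derivative u (at r) /\<^sub>R norm (vector_derivative x (at r))) \<bullet>
                 (vector_derivative v (at r) /\<^sub>R norm (vector_derivative x (at r)))) *
                 norm (vector_derivative x (at r)))
       = (\<Sum>j\<in>{1..Ni}. ((u (qi j) - u (qi (j - 1))) \<bullet> (v (qi j) - v (qi (j - 1)))) /
              norm (x (qi j) - x (qi (j - 1))))"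
proof -
  let ?g = "\<lambda>r. ((vector_derivative u (at r) /\<^sub>R norm (vector_derivative x (at r))) \<bullet>
                 (vector_derivative v (at r) /\<^sub>R norm (vector_derivative x (at r)))) *
                 norm (vector_derivative x (at r))"
  let ?t = "\<lambda>j. ((u (qi j) - u (qi (j - 1))) \<bullet> (v (qi j) - v (qi (j - 1)))) /
              norm (x (qi j) - x (qi (j - 1)))"
  have "m \<le> Ni \<Longrightarrow> (?g has_integral (\<Sum>j\<in>{1..m}. ?t j)) {qi 0..qi m}" for m
  proof (induction m)
    case 0 then show ?case by auto
  next
    case (Suc m)
    have "(?g has_integral (\<Sum>j\<in>{1..m}. ?t j) + ?t (Suc m)) {qi 0..qi (Suc m)}"
      apply (rule has_integral_combine[of _ "qi m"])
      using part_le[OF P, of 0 m] part_le[OF P, of m "Suc m"] Suc.prems Suc.IH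
        seg_has_integral[OF P pu pv px h, of "Suc m"] by auto
    then show ?case by (simp add: add.commute)
  qed
  from this[of Ni] have "(?g has_integral (\<Sum>j\<in>{1..Ni}. ?t j)) {0..1}"
    using P unfolding part_def by simp
  then show ?thesis by (rule integral_unique)
qed

lemma plus_fun_apply[simp]: "(f + g) x = f x + g x" by (simp add: func_plus)
lemma zero_fun_apply[simp]: "(0::'a \<Rightarrow> 'b::zero) x = 0" by (simp add: func_zero)
lemma minus_fun_apply'[simp]: "(f - g) x = f x - (g::'a \<Rightarrow> 'b::ab_group_add) x" by simp
lemma uminus_fun_apply'[simp]: "(- f) x = - (f::'a \<Rightarrow> 'b::ab_group_add) x" by simp

lemma net_part: "network NC N q clsd NT ic rh \<Longrightarrow> i < NC \<Longrightarrow> part (q i) (N i)"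
  unfolding network_def part_def by auto

lemma pw_affineI:
  assumes "continuous_on {0..1} f" "cl \<longrightarrow> f 0 = f 1"
    "\<And>j. j \<in> {1..Ni} \<Longrightarrow> \<exists>a b. \<forall>r\<in>{qi (j - 1)..qi j}. f r = a + r *\<^sub>R b"
  shows "pw_affine qi Ni cl f"
  unfolding pw_affine_def using assms by blast

lemma pw_affineD:
  assumes "pw_affine qi Ni cl f"
  shows "continuous_on {0..1} f" "cl \<longrightarrow> f 0 = f 1"
    "\<And>j. j \<in> {1..Ni} \<Longrightarrow> \<exists>a b. \<forall>r\<in>{qi (j - 1)..qi j}. f r = a + r *\<^sub>R b"
  using assms unfolding pw_affine_def by blast+

lemma pw_affine_0: "pw_affine qi Ni cl (\<lambda>r. 0::'v::real_normed_vector)"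
proof (rule pw_affineI)
  fix j show "\<exists>a b. \<forall>r\<in>{qi (j - 1)..qi j}. (0::'v) = a + r *\<^sub>R b"
    by (rule exI[of _ 0], rule exI[of _ 0]) simp
qed (simp_all add: continuous_on_const)

lemma pw_affine_add:
  assumes f: "pw_affine qi Ni cl f" and g: "pw_affine qi Ni cl g"
  shows "pw_affine qi Ni cl (\<lambda>r. f r + g r)"
proof (rule pw_affineI)
  show "continuous_on {0..1} (\<lambda>r. f r + g r)"
    by (rule continuous_on_add[OF pw_affineD(1)[OF f] pw_affineD(1)[OF g]])
  show "cl \<longrightarrow> f 0 + g 0 = f 1 + g 1" using pw_affineD(2)[OF f] pw_affineD(2)[OF g] by auto
  fix j assume j: "j \<in> {1..Ni}"
  obtain a b where ab: "\<forall>r\<in>{qi (j - 1)..qi j}. f r = a + r *\<^sub>R b" using pw_affineD(3)[OF f j] by blast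
  obtain a' b' where ab': "\<forall>r\<in>{qi (j - 1)..qi j}. g r = a' + r *\<^sub>R b'" using pw_affineD(3)[OF g j] by blast
  have "\<forall>r\<in>{qi (j - 1)..qi j}. f r + g r = (a + a') + r *\<^sub>R (b + b')"
    using ab ab' by (simp add: algebra_simps)
  then show "\<exists>a b. \<forall>r\<in>{qi (j - 1)..qi j}. f r + g r = a + r *\<^sub>R b" by blast
qed

lemma pw_affine_scale:
  assumes f: "pw_affine qi Ni cl f"
  shows "pw_affine qi Ni cl (\<lambda>r. c *\<^sub>R f r)"
proof (rule pw_affineI)
  show "continuous_on {0..1} (\<lambda>r. c *\<^sub>R f r)"
    by (rule continuous_on_scaleR[OF continuous_on_const pw_affineD(1)[OF f]])
  show "cl \<longrightarrow> c *\<^sub>R f 0 = c *\<^sub>R f 1" using pw_affineD(2)[OF f] by auto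
  fix j assume j: "j \<in> {1..Ni}"
  obtain a b where ab: "\<forall>r\<in>{qi (j - 1)..qi j}. f r = a + r *\<^sub>R b" using pw_affineD(3)[OF f j] by blast
  have "\<forall>r\<in>{qi (j - 1)..qi j}. c *\<^sub>R f r = (c *\<^sub>R a) + r *\<^sub>R (c *\<^sub>R b)"
    using ab by (simp add: algebra_simps)
  then show "\<exists>a b. \<forall>r\<in>{qi (j - 1)..qi j}. c *\<^sub>R f r = a + r *\<^sub>R b" by blast
qed

lemma pw_affine_cong:
  assumes "part qi Ni" "pw_affine qi Ni cl g" "\<forall>r\<in>{0..1}. f r = g r"
  shows "pw_affine qi Ni cl f"
proof -
  have sub: "{qi (j - 1)..qi j} \<subseteq> {0..1}" if "j \<in> {1..Ni}" for j
    using part_01[OF assms(1), of "j - 1"] part_01[OF assms(1), of j] that by auto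
  have "continuous_on {0..1} g" using assms(2) unfolding pw_affine_def by blast
  then have c: "continuous_on {0..1} f" by (rule continuous_on_eq) (simp add: assms(3))
  have "f 0 = g 0" "f 1 = g 1" using assms(3) by simp_all
  moreover have "cl \<longrightarrow> g 0 = g 1" using conjunct1[OF conjunct2[OF assms(2)[unfolded pw_affine_def]]] .
  ultimately have p: "cl \<longrightarrow> f 0 = f 1" by simp
  have s: "\<exists>a b. \<forall>r\<in>{qi (j - 1)..qi j}. f r = a + r *\<^sub>R b" if jj: "j \<in> {1..Ni}" for j
  proof -
    obtain a b where ab: "\<forall>r\<in>{qi (j - 1)..qi j}. g r = a + r *\<^sub>R b"
      using bspec[OF conjunct2[OF conjunct2[OF assms(2)[unfolded pw_affine_def]]] jj] by blast
    show ?thesis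
    proof (intro exI ballI)
      fix r assume r: "r \<in> {qi (j - 1)..qi j}"
      then have "r \<in> {0..1}" using sub[OF jj] by blast
      then have "f r = g r" using assms(3) by blast
      then show "f r = a + r *\<^sub>R b" using ab r by simp
    qed
  qed
  show ?thesis unfolding pw_affine_def
  proof (intro conjI c p ballI)
    fix j assume "j \<in> {1..Ni}" then show "\<exists>a b. \<forall>r\<in>{qi (j - 1)..qi j}. f r = a + r *\<^sub>R b" by (rule s)
  qed
qed

lemma ext_net_0: "extensional_net NC 0"
  unfolding extensional_net_def by simp
lemma ext_net_add: "extensional_net NC (u::nat\<Rightarrow>real\<Rightarrow>'v::real_vector) \<Longrightarrow> extensional_net NC v \<Longrightarrow> extensional_net NC (u + v)"
  unfolding extensional_net_def by simp
lemma ext_net_scale: "extensional_net NC (u::nat\<Rightarrow>real\<Rightarrow>'v::real_vector) \<Longrightarrow> extensional_net NC (c *\<^sub>R u)"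
  unfolding extensional_net_def by simp

lemma subspace_Wh: "subspace (Wh NC N q clsd)"
proof -
  have z: "(0::nat \<Rightarrow> real \<Rightarrow> real) i = (\<lambda>r. 0)" for i by (rule ext) simp
  have "\<forall>i<NC. pw_affine (q i) (N i) (clsd i) ((0::nat \<Rightarrow> real \<Rightarrow> real) i)"
    unfolding z using pw_affine_0 by blast
  then have A: "0 \<in> Wh NC N q clsd" unfolding Wh_def mem_Collect_eq
    using ext_net_0 by blast
  have B: "x + y \<in> Wh NC N q clsd" if "x \<in> Wh NC N q clsd" "y \<in> Wh NC N q clsd" for x y
  proof -
    have eq: "(x + y) i = (\<lambda>r. x i r + y i r)" for i by (rule ext) (simp only: plus_fun_apply)
    have "extensional_net NC (x + y)" using ext_net_add that unfolding Wh_def by blast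
    moreover have "\<forall>i<NC. pw_affine (q i) (N i) (clsd i) ((x + y) i)"
      unfolding eq using pw_affine_add that[unfolded Wh_def mem_Collect_eq] by blast
    ultimately show ?thesis unfolding Wh_def mem_Collect_eq by blast
  qed
  have C: "c *\<^sub>R x \<in> Wh NC N q clsd" if "x \<in> Wh NC N q clsd" for c x
  proof -
    have eq: "(c *\<^sub>R x) i = (\<lambda>r. c *\<^sub>R x i r)" for i by (rule ext) (simp only: scaleR_fun_apply)
    have "extensional_net NC (c *\<^sub>R x)" using ext_net_scale that unfolding Wh_def by blast
    moreover have "\<forall>i<NC. pw_affine (q i) (N i) (clsd i) ((c *\<^sub>R x) i)"
      unfolding eq using pw_affine_scale that[unfolded Wh_def mem_Collect_eq] by blast
    ultimately show ?thesis unfolding Wh_def mem_Collect_eq by blast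
  qed
  show ?thesis unfolding subspace_def
    by (intro conjI ballI allI A B C)
qed

lemma subspace_Vh: "subspace (Vh NC N q clsd NT ic rh)"
proof -
  let ?V = "Vh NC N q clsd NT ic rh"
  have z: "(0::nat \<Rightarrow> real \<Rightarrow> real^3) i = (\<lambda>r. 0)" for i by (rule ext) simp
  have "\<forall>i<NC. pw_affine (q i) (N i) (clsd i) ((0::nat \<Rightarrow> real \<Rightarrow> real^3) i)"
    unfolding z using pw_affine_0 by blast
  then have A: "0 \<in> ?V" unfolding Vh_def mem_Collect_eq
    using ext_net_0 by simp
  have B: "x + y \<in> ?V" if "x \<in> ?V" "y \<in> ?V" for x y
  proof -
    have eq: "(x + y) i = (\<lambda>r. x i r + y i r)" for i by (rule ext) (simp only: plus_fun_apply)
    have "extensional_net NC (x + y)" using ext_net_add that unfolding Vh_def by blast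
    moreover have "\<forall>i<NC. pw_affine (q i) (N i) (clsd i) ((x + y) i)"
      unfolding eq using pw_affine_add that[unfolded Vh_def mem_Collect_eq] by blast
    moreover have "\<forall>k<NT. (x + y) (ic k 0) (rh k 0) = (x + y) (ic k 1) (rh k 1) \<and>
        (x + y) (ic k 1) (rh k 1) = (x + y) (ic k 2) (rh k 2)"
      using that unfolding Vh_def by simp
    ultimately show ?thesis unfolding Vh_def mem_Collect_eq by blast
  qed
  have C: "c *\<^sub>R x \<in> ?V" if "x \<in> ?V" for c x
  proof -
    have eq: "(c *\<^sub>R x) i = (\<lambda>r. c *\<^sub>R x i r)" for i by (rule ext) (simp only: scaleR_fun_apply)
    have "extensional_net NC (c *\<^sub>R x)" using ext_net_scale that unfolding Vh_def by blast
    moreover have "\<forall>i<NC. pw_affine (q i) (N i) (clsd i) ((c *\<^sub>R x) i)"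
      unfolding eq using pw_affine_scale that[unfolded Vh_def mem_Collect_eq] by blast
    moreover have "\<forall>k<NT. (c *\<^sub>R x) (ic k 0) (rh k 0) = (c *\<^sub>R x) (ic k 1) (rh k 1) \<and>
        (c *\<^sub>R x) (ic k 1) (rh k 1) = (c *\<^sub>R x) (ic k 2) (rh k 2)"
      using that unfolding Vh_def by simp
    ultimately show ?thesis unfolding Vh_def mem_Collect_eq by blast
  qed
  show ?thesis unfolding subspace_def
    by (intro conjI ballI allI A B C)
qed

lemma subspace_VPhi: "subspace (V_Phi gPhi NC N q clsd NT ic rh X)"
proof -
  let ?V = "V_Phi gPhi NC N q clsd NT ic rh X"
  have S: "subspace (Vh NC N q clsd NT ic rh)" by (rule subspace_Vh)
  have A: "0 \<in> ?V" unfolding V_Phi_def using subspace_0[OF S] by simp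
  have B: "x + y \<in> ?V" if "x \<in> ?V" "y \<in> ?V" for x y
    using that subspace_add[OF S] unfolding V_Phi_def by (simp add: inner_add_left)
  have C: "c *\<^sub>R x \<in> ?V" if "x \<in> ?V" for c x
    using that subspace_scale[OF S] unfolding V_Phi_def by (simp add: inner_scaleR_left)
  show ?thesis unfolding subspace_def
    by (intro conjI ballI allI A B C)
qed

lemma VPhi_Vh: "V_Phi gPhi NC N q clsd NT ic rh X \<subseteq> Vh NC N q clsd NT ic rh"
  unfolding V_Phi_def by blast

lemma lumped_cong_nodes:
  assumes "\<And>i j. i < NC \<Longrightarrow> j \<le> N i \<Longrightarrow> f i (q i j) = g i (q i j)"
  shows "lumped NC N q X f = lumped NC N q X g"
  unfolding lumped_def using assms by (auto intro!: sum.cong arg_cong2[where f="(*)"])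

lemma lumped_add: "lumped NC N q X (\<lambda>i r. f i r + g i r) = lumped NC N q X f + lumped NC N q X g"
  unfolding lumped_def by (simp add: sum.distrib algebra_simps)

lemma lumped_scale: "lumped NC N q X (\<lambda>i r. c * f i r) = c * lumped NC N q X f"
  unfolding lumped_def by (simp add: sum_distrib_left algebra_simps)

lemma lumped_zero_nodes:
  assumes P: "\<And>i. i < NC \<Longrightarrow> part (q i) (N i)"
    and h: "\<And>i j. i < NC \<Longrightarrow> j \<in> {1..N i} \<Longrightarrow> norm (X i (q i j) - X i (q i (j - 1))) > 0"
    and nn: "\<And>i j. i < NC \<Longrightarrow> j \<le> N i \<Longrightarrow> f i (q i j) \<ge> 0"
    and z: "lumped NC N q X f = 0"
    and i: "i < NC" and j: "j \<le> N i"
  shows "f i (q i j) = 0"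
proof -
  let ?t = "\<lambda>i j. norm (X i (q i j) - X i (q i (j - 1))) * (f i (q i j) + f i (q i (j - 1)))"
  have tnn: "?t i' j' \<ge> 0" if "i' < NC" "j' \<in> {1..N i'}" for i' j'
    using h[OF that] nn[OF that(1), of j'] nn[OF that(1), of "j' - 1"] that by auto
  have "(\<Sum>i<NC. \<Sum>j\<in>{1..N i}. ?t i j) = 0" using z unfolding lumped_def by simp
  then have "\<forall>i'\<in>{..<NC}. (\<Sum>j\<in>{1..N i'}. ?t i' j) = 0"
    by (subst (asm) sum_nonneg_eq_0_iff) (auto intro!: sum_nonneg tnn simp del: One_nat_def)
  then have "(\<Sum>j\<in>{1..N i}. ?t i j) = 0" using i by auto
  then have T: "\<forall>j'\<in>{1..N i}. ?t i j' = 0"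
    by (subst (asm) sum_nonneg_eq_0_iff) (auto intro!: tnn i simp del: One_nat_def)
  have Ni: "N i \<ge> 1" using P[OF i] unfolding part_def by simp
  have key: "f i (q i j') = 0 \<and> f i (q i (j' - 1)) = 0" if j': "j' \<in> {1..N i}" for j'
  proof -
    have t: "?t i j' = 0" using T j' by blast
    have pos: "norm (X i (q i j') - X i (q i (j' - 1))) > 0" by (rule h[OF i j'])
    have s0: "f i (q i j') + f i (q i (j' - 1)) = 0"
      using t pos by (metis mult_eq_0_iff less_irrefl)
    have "f i (q i j') \<ge> 0" "f i (q i (j' - 1)) \<ge> 0" using nn[OF i] j' by auto
    then show ?thesis using s0 by linarith
  qed
  show ?thesis
  proof (cases "j = 0")
    case True
    then show ?thesis using key[of 1] Ni by auto
  next
    case False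
    then show ?thesis using key[of j] j by auto
  qed
qed

definition Sn :: "nat \<Rightarrow> (nat \<Rightarrow> nat) \<Rightarrow> (nat \<Rightarrow> nat \<Rightarrow> real) \<Rightarrow> (nat \<Rightarrow> real \<Rightarrow> real^3)
   \<Rightarrow> (nat \<Rightarrow> real \<Rightarrow> real^3) \<Rightarrow> (nat \<Rightarrow> real \<Rightarrow> real^3) \<Rightarrow> real" where
  "Sn NC N q X u v = (\<Sum>i<NC. \<Sum>j\<in>{1..N i}. ((u i (q i j) - u i (q i (j - 1))) \<bullet> (v i (q i j) - v i (q i (j - 1))))
        / norm (X i (q i j) - X i (q i (j - 1))))"

lemma Sn_add1: "Sn NC N q X (u + u') v = Sn NC N q X u v + Sn NC N q X u' v"
proof -
  have e: "((u + u') i (q i j) - (u + u') i (q i (j - 1))) \<bullet> w =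
     (u i (q i j) - u i (q i (j - 1))) \<bullet> w + (u' i (q i j) - u' i (q i (j - 1))) \<bullet> w" for i j w
    by (simp add: inner_add_left inner_diff_left)
  show ?thesis unfolding Sn_def e by (simp add: add_divide_distrib sum.distrib)
qed

lemma Sn_add2: "Sn NC N q X u (v + v') = Sn NC N q X u v + Sn NC N q X u v'"
proof -
  have e: "w \<bullet> ((v + v') i (q i j) - (v + v') i (q i (j - 1))) =
     w \<bullet> (v i (q i j) - v i (q i (j - 1))) + w \<bullet> (v' i (q i j) - v' i (q i (j - 1)))" for i j w
    by (simp add: inner_add_right inner_diff_right)
  show ?thesis unfolding Sn_def e by (simp add: add_divide_distrib sum.distrib)
qed

lemma Sn_scale1: "Sn NC N q X (c *\<^sub>R u) v = c * Sn NC N q X u v"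
proof -
  have e: "((c *\<^sub>R u) i (q i j) - (c *\<^sub>R u) i (q i (j - 1))) \<bullet> w =
     c * ((u i (q i j) - u i (q i (j - 1))) \<bullet> w)" for i j w
    by (simp add: inner_diff_left inner_scaleR_left algebra_simps)
  show ?thesis unfolding Sn_def e by (simp add: sum_distrib_left)
qed

lemma Sn_scale2: "Sn NC N q X u (c *\<^sub>R v) = c * Sn NC N q X u v"
proof -
  have e: "w \<bullet> ((c *\<^sub>R v) i (q i j) - (c *\<^sub>R v) i (q i (j - 1))) =
     c * (w \<bullet> (v i (q i j) - v i (q i (j - 1))))" for i j w
    by (simp add: inner_diff_right inner_scaleR_right algebra_simps)
  show ?thesis unfolding Sn_def e by (simp add: sum_distrib_left)
qed

lemma Sn_zero2: "Sn NC N q X u 0 = 0"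
  unfolding Sn_def by simp

lemma l2m_Sn:
  assumes net: "network NC N q clsd NT ic rh"
    and A: "assm_A NC N q clsd X"
    and pX: "\<And>i. i < NC \<Longrightarrow> pw_affine (q i) (N i) (clsd i) (X i)"
    and pu: "\<And>i. i < NC \<Longrightarrow> pw_affine (q i) (N i) (clsd i) (u i)"
    and pv: "\<And>i. i < NC \<Longrightarrow> pw_affine (q i) (N i) (clsd i) (v i)"
  shows "l2m NC X (nabla_s X u) (nabla_s X v) = Sn NC N q X u v"
  unfolding l2m_def Sn_def nabla_s_def
  apply (rule sum.cong[OF refl])
  subgoal for i
    apply (rule curve_integral)
    using net_part[OF net, of i] pu[of i] pv[of i] pX[of i] A unfolding assm_A_def by auto
  done

lemma Sn_nonneg:
  assumes "\<And>i j. i < NC \<Longrightarrow> j \<in> {1..N i} \<Longrightarrow> norm (X i (q i j) - X i (q i (j - 1))) > 0"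
  shows "Sn NC N q X u u \<ge> 0"
  unfolding Sn_def using assms by (intro sum_nonneg) (auto intro!: divide_nonneg_pos)

lemma Sn_zero_const:
  assumes h: "\<And>i j. i < NC \<Longrightarrow> j \<in> {1..N i} \<Longrightarrow> norm (X i (q i j) - X i (q i (j - 1))) > 0"
    and z: "Sn NC N q X u u = 0" and i: "i < NC"
  shows "j \<le> N i \<Longrightarrow> u i (q i j) = u i (q i 0)"
proof -
  let ?t = "\<lambda>i j. ((u i (q i j) - u i (q i (j - 1))) \<bullet> (u i (q i j) - u i (q i (j - 1))))
        / norm (X i (q i j) - X i (q i (j - 1)))"
  have tnn: "?t i' j' \<ge> 0" if "i' < NC" "j' \<in> {1..N i'}" for i' j'
    using h[OF that] by (auto intro!: divide_nonneg_pos)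
  have "\<forall>i'\<in>{..<NC}. (\<Sum>j\<in>{1..N i'}. ?t i' j) = 0"
    using z unfolding Sn_def
    by (subst (asm) sum_nonneg_eq_0_iff) (auto intro!: sum_nonneg tnn simp del: One_nat_def)
  then have "(\<Sum>j\<in>{1..N i}. ?t i j) = 0" using i by auto
  then have T: "\<forall>j'\<in>{1..N i}. ?t i j' = 0"
    by (subst (asm) sum_nonneg_eq_0_iff) (auto intro!: tnn i simp del: One_nat_def)
  have step: "u i (q i j') = u i (q i (j' - 1))" if j': "j' \<in> {1..N i}" for j'
  proof -
    have "?t i j' = 0" using T j' by blast
    moreover have "norm (X i (q i j') - X i (q i (j' - 1))) > 0" by (rule h[OF i j'])
    ultimately have "(u i (q i j') - u i (q i (j' - 1))) \<bullet> (u i (q i j') - u i (q i (j' - 1))) = 0"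
      by simp
    then show ?thesis by simp
  qed
  show "j \<le> N i \<Longrightarrow> u i (q i j) = u i (q i 0)"
  proof (induction j)
    case 0 then show ?case by simp
  next
    case (Suc j)
    then show ?case using step[of "Suc j"] by simp
  qed
qed

lemma fin_supp_span:
  fixes z :: "'k \<Rightarrow> 'b::euclidean_space"
  assumes K: "finite K" and z: "\<forall>k. k \<notin> K \<longrightarrow> z k = 0"
  shows "z \<in> span ((\<lambda>(k, e). (\<lambda>k'. if k' = k then e else 0)) ` (K \<times> Basis))"
proof -
  define d where "d = (\<lambda>(k::'k, e::'b). (\<lambda>k'. if k' = k then e else 0))"
  have eq: "z = (\<Sum>p\<in>K \<times> Basis. (z (fst p) \<bullet> snd p) *\<^sub>R d p)"
  proof (rule ext)
    fix k'
    have "(\<Sum>p\<in>K \<times> Basis. (z (fst p) \<bullet> snd p) *\<^sub>R d p) k' =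
          (\<Sum>p\<in>K \<times> Basis. (z (fst p) \<bullet> snd p) *\<^sub>R d p k')"
      by (simp add: sum_fun_apply)
    also have "\<dots> = (\<Sum>k\<in>K. \<Sum>e\<in>Basis. (z k \<bullet> e) *\<^sub>R d (k, e) k')"
      by (subst sum.cartesian_product) (auto intro!: sum.cong simp: split_beta)
    also have "\<dots> = (\<Sum>k\<in>K. if k' = k then (\<Sum>e\<in>Basis. (z k \<bullet> e) *\<^sub>R e) else 0)"
      unfolding d_def by (auto intro!: sum.cong)
    also have "\<dots> = (if k' \<in> K then z k' else 0)"
      using K by (simp add: euclidean_representation)
    also have "\<dots> = z k'" using z by auto
    finally show "z k' = (\<Sum>p\<in>K \<times> Basis. (z (fst p) \<bullet> snd p) *\<^sub>R d p) k'" by simp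
  qed
  show ?thesis unfolding d_def[symmetric]
    by (subst eq) (intro span_sum span_scale span_base imageI, simp)
qed

lemma perp_span3:
  fixes c :: "real^3"
  assumes "dim (span S) = 3" "\<forall>x\<in>S. c \<bullet> x = 0"
  shows "c = 0"
proof -
  have "dim S = DIM(real^3)" using assms(1) by simp
  then have "span S = UNIV" using dim_eq_full by blast
  then have "c \<in> span S" by simp
  then have "orthogonal c c" using orthogonal_to_span[of c S c] assms(2) unfolding orthogonal_def by blast
  then show ?thesis unfolding orthogonal_def by simp
qed

lemma omega_M_periodic:
  assumes "clsd i" "N i \<ge> 1" "X i (q i 0) = X i (q i (N i))"
  shows "omega_M gPhi N q clsd X i 0 = omega_M gPhi N q clsd X i (N i)"
  using assms unfolding omega_M_def omega_d_def omega_Phi_def nxt_def prv_def Let_def by auto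

lemma nodal_zero:
  fixes u :: "nat \<Rightarrow> real \<Rightarrow> 'v::real_normed_vector"
  assumes P: "\<And>i. i < NC \<Longrightarrow> part (q i) (N i)"
    and e: "extensional_net NC u" and pw: "\<And>i. i < NC \<Longrightarrow> pw_affine (q i) (N i) (clsd i) (u i)"
    and z: "\<And>i j. i < NC \<Longrightarrow> j \<le> N i \<Longrightarrow> u i (q i j) = 0"
  shows "u = 0"
proof (rule ext, rule ext)
  fix i r
  show "u i r = (0::nat \<Rightarrow> real \<Rightarrow> 'v) i r"
  proof (cases "i < NC \<and> r \<in> {0..1}")
    case True
    then have i: "i < NC" and r: "r \<in> {0..1}" by auto
    have "\<forall>j\<le>N i. u i (q i j) = 0" using z[OF i] by blast
    then show ?thesis using pw_affine_zero[OF P[OF i] pw[OF i] _ r] by simp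
  next
    case False
    then show ?thesis using e unfolding extensional_net_def by auto
  qed
qed

lemma lumped_nonneg:
  assumes "\<And>i j. i < NC \<Longrightarrow> j \<le> N i \<Longrightarrow> f i (q i j) \<ge> 0"
  shows "lumped NC N q X f \<ge> 0"
  unfolding lumped_def using assms
  by (intro mult_nonneg_nonneg sum_nonneg) (auto simp del: One_nat_def)

theorem mainTheorem1:
  fixes Phi :: "real^3 \<Rightarrow> real" and gPhi :: "real^3 \<Rightarrow> real^3"
    and D2Phi :: "real^3 \<Rightarrow> ((real^3) \<Rightarrow>\<^sub>L (real^3))"
    and NC NT :: nat and N :: "nat \<Rightarrow> nat" and q :: "nat \<Rightarrow> nat \<Rightarrow> real"
    and clsd :: "nat \<Rightarrow> bool" and ic :: "nat \<Rightarrow> nat \<Rightarrow> nat" and rh :: "nat \<Rightarrow> nat \<Rightarrow> real"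
    and X :: "nat \<Rightarrow> real \<Rightarrow> real^3" and F :: "nat \<Rightarrow> real \<Rightarrow> real"
    and sigma tau :: real
  assumes Phi_grad: "\<And>z. (Phi has_derivative (\<lambda>h. gPhi z \<bullet> h)) (at z)"
    and Phi_C2: "\<And>z. (gPhi has_derivative blinfun_apply (D2Phi z)) (at z)" "continuous_on UNIV D2Phi"
    and Phi_regular: "\<And>z. Phi z = 0 \<Longrightarrow> gPhi z \<noteq> 0"
    and net: "network NC N q clsd NT ic rh"
    and X_in: "X \<in> Vh NC N q clsd NT ic rh"
    and X_nodes: "\<And>i j. i < NC \<Longrightarrow> j \<le> N i \<Longrightarrow> gPhi (X i (q i j)) \<noteq> 0"
    and sigma_pos: "sigma > 0" and tau_pos: "tau > 0"
    and A: "assm_A NC N q clsd X"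
    and A1: "assm_A1 gPhi NC N q clsd X"
    and A2: "assm_A2 gPhi N q clsd NT ic X"
    and F_in: "F \<in> Wh NC N q clsd"
  shows "\<exists>!(dX, kappa).
     dX \<in> V_Phi gPhi NC N q clsd NT ic rh X \<and> kappa \<in> Wh NC N q clsd \<and>
     (\<forall>chi\<in>Wh NC N q clsd.
        lumped NC N q X (\<lambda>i r. (dX i r /\<^sub>R tau) \<bullet> (chi i r *\<^sub>R omega_M_fun gPhi N q clsd X i r))
        - sigma * lumped NC N q X (\<lambda>i r. kappa i r * chi i r)
        = lumped NC N q X (\<lambda>i r. F i r * chi i r)) \<and>
     (\<forall>eta\<in>V_Phi gPhi NC N q clsd NT ic rh X.
        lumped NC N q X (\<lambda>i r. (kappa i r *\<^sub>R omega_M_fun gPhi N q clsd X i r) \<bullet> eta i r)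
        + l2m NC X (nabla_s X dX) (nabla_s X eta)
        = - l2m NC X (nabla_s X X) (nabla_s X eta))"
proof -
  define W where "W = Wh NC N q clsd"
  define V where "V = V_Phi gPhi NC N q clsd NT ic rh X"
  define om where "om = omega_M_fun gPhi N q clsd X"
  define L where "L = lumped NC N q X"
  define S where "S = Sn NC N q X"
  define E1 where "E1 dX kappa chi = L (\<lambda>i r. (dX i r /\<^sub>R tau) \<bullet> (chi i r *\<^sub>R om i r))
      - sigma * L (\<lambda>i r. kappa i r * chi i r)"
    for dX :: "nat \<Rightarrow> real \<Rightarrow> real^3" and kappa chi :: "nat \<Rightarrow> real \<Rightarrow> real"
  define E2 where "E2 dX kappa eta = L (\<lambda>i r. (kappa i r *\<^sub>R om i r) \<bullet> eta i r) + S dX eta"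
    for dX eta :: "nat \<Rightarrow> real \<Rightarrow> real^3" and kappa :: "nat \<Rightarrow> real \<Rightarrow> real"
  define B where "B u v = E1 (fst u) (snd u) (snd v) + E2 (fst u) (snd u) (fst v)"
    for u v :: "(nat \<Rightarrow> real \<Rightarrow> real^3) \<times> (nat \<Rightarrow> real \<Rightarrow> real)"
  define l where "l v = L (\<lambda>i r. F i r * snd v i r) - S X (fst v)"
    for v :: "(nat \<Rightarrow> real \<Rightarrow> real^3) \<times> (nat \<Rightarrow> real \<Rightarrow> real)"
  define U where "U = V \<times> W"
  have B1: "linear (\<lambda>u. B u v)" for v
    by (rule linearI) (simp_all add: B_def E1_def E2_def S_def L_def Sn_add1 Sn_scale1
        scaleR_add_right inner_add_left lumped_add lumped_scale algebra_simps)
  have B2: "linear (B u)" for u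
    by (rule linearI) (simp_all add: B_def E1_def E2_def S_def L_def Sn_add2 Sn_scale2
        scaleR_add_right inner_add_right lumped_add lumped_scale algebra_simps)
  have ll: "linear l"
    by (rule linearI) (simp_all add: l_def S_def L_def Sn_add2 Sn_scale2 lumped_add lumped_scale algebra_simps)
  have P: "\<And>i. i < NC \<Longrightarrow> part (q i) (N i)" using net_part[OF net] .
  have h: "\<And>i j. i < NC \<Longrightarrow> j \<in> {1..N i} \<Longrightarrow> norm (X i (q i j) - X i (q i (j - 1))) > 0"
    using A unfolding assm_A_def by blast
  have pX: "\<And>i. i < NC \<Longrightarrow> pw_affine (q i) (N i) (clsd i) (X i)"
    using X_in unfolding Vh_def by blast
  have Vpw: "\<And>i. u \<in> V \<Longrightarrow> i < NC \<Longrightarrow> pw_affine (q i) (N i) (clsd i) (u i)"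
    and Vext: "u \<in> V \<Longrightarrow> extensional_net NC u" for u
    unfolding V_def V_Phi_def Vh_def by blast+
  have Wpw: "\<And>i. u \<in> W \<Longrightarrow> i < NC \<Longrightarrow> pw_affine (q i) (N i) (clsd i) (u i)"
    and Wext: "u \<in> W \<Longrightarrow> extensional_net NC u" for u
    unfolding W_def Wh_def by blast+
  have subU: "subspace U" unfolding U_def V_def W_def
    by (rule subspace_Times[OF subspace_VPhi subspace_Wh])
  define K where "K = (SIGMA i:{..<NC}. {..N i})"
  have finK: "finite K" unfolding K_def by auto
  define E where "E u = (\<lambda>k. if k \<in> K then (fst u (fst k) (q (fst k) (snd k)), snd u (fst k) (q (fst k) (snd k))) else 0)"
    for u :: "(nat \<Rightarrow> real \<Rightarrow> real^3) \<times> (nat \<Rightarrow> real \<Rightarrow> real)"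
  define H where "H = (\<lambda>(k, e). (\<lambda>k'. if k' = k then e else 0)) ` (K \<times> (Basis :: ((real^3) \<times> real) set))"
  have linE: "linear E"
    by (rule linearI) (auto simp: E_def fun_eq_iff)
  have finH: "finite H" unfolding H_def using finK by simp
  have EH: "E ` U \<subseteq> span H"
  proof
    fix z assume "z \<in> E ` U"
    then obtain u where "z = E u" by blast
    then show "z \<in> span H" unfolding H_def
      by (intro fin_supp_span finK) (simp add: E_def)
  qed
  have E0: "u = 0" if u: "u \<in> U" "E u = 0" for u
  proof -
    have nz: "fst u i (q i j) = 0 \<and> snd u i (q i j) = 0" if "i < NC" "j \<le> N i" for i j
    proof -
      have "E u (i, j) = 0" using u by simp
      moreover have "(i, j) \<in> K" using that unfolding K_def by auto
      ultimately show ?thesis unfolding E_def by (simp add: zero_prod_def)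
    qed
    have fV: "fst u \<in> V" and sW: "snd u \<in> W" using u unfolding U_def by auto
    have "fst u = 0" by (rule nodal_zero[OF P Vext[OF fV] Vpw[OF fV]]) (use nz in auto)
    moreover have "snd u = 0" by (rule nodal_zero[OF P Wext[OF sW] Wpw[OF sW]]) (use nz in auto)
    ultimately show ?thesis by (simp add: prod_eq_iff)
  qed
  have Lz: "L (\<lambda>i r. 0) = 0" unfolding L_def lumped_def by simp
  have nd: "u = 0" if u: "u \<in> U" "\<forall>v\<in>U. B u v = 0" for u
  proof -
    obtain dX kappa where w: "u = (dX, kappa)" by (cases u)
    have dV: "dX \<in> V" and kW: "kappa \<in> W" using u(1) unfolding w U_def by auto
    have "(-tau) *\<^sub>R kappa \<in> W" using kW subspace_scale[OF subspace_Wh] unfolding W_def by blast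
    then have v1: "(dX, (-tau) *\<^sub>R kappa) \<in> U" unfolding U_def using dV by blast
    have c1: "(\<lambda>i r. (dX i r /\<^sub>R tau) \<bullet> (((-tau) *\<^sub>R kappa) i r *\<^sub>R om i r)) =
              (\<lambda>i r. (-1) * ((kappa i r *\<^sub>R om i r) \<bullet> dX i r))"
      using tau_pos by (auto simp: fun_eq_iff inner_commute)
    have c2: "(\<lambda>i r. kappa i r * ((-tau) *\<^sub>R kappa) i r) = (\<lambda>i r. (-tau) * (kappa i r * kappa i r))"
      by (auto simp: fun_eq_iff)
    have "B u (dX, (-tau) *\<^sub>R kappa) = tau * sigma * L (\<lambda>i r. kappa i r * kappa i r) + S dX dX"
      unfolding B_def E1_def E2_def w fst_conv snd_conv c1 c2 L_def lumped_scale by simp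
    then have sum0: "tau * sigma * L (\<lambda>i r. kappa i r * kappa i r) + S dX dX = 0"
      using u(2) v1 by auto
    have Lk: "L (\<lambda>i r. kappa i r * kappa i r) \<ge> 0" unfolding L_def
      by (rule lumped_nonneg) simp
    have Sd: "S dX dX \<ge> 0" unfolding S_def by (rule Sn_nonneg[where X=X and q=q and N=N and NC=NC, OF h])
    have ts: "tau * sigma > 0" using tau_pos sigma_pos by simp
    have Lk0: "L (\<lambda>i r. kappa i r * kappa i r) = 0"
      using sum0 Lk Sd ts by (smt (verit) mult_pos_pos mult_nonneg_nonneg)
    have Sd0: "S dX dX = 0" using sum0 Lk Sd ts by (smt (verit) mult_nonneg_nonneg)
    have knode: "kappa i (q i j) = 0" if "i < NC" "j \<le> N i" for i j
      using lumped_zero_nodes[where X=X and q=q and N=N and NC=NC, OF P h _ Lk0[unfolded L_def] that] by simp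
    have k0: "kappa = 0" by (rule nodal_zero[OF P Wext[OF kW] Wpw[OF kW]]) (use knode in auto)
    have const: "dX i (q i j) = dX i (q i 0)" if "i < NC" "j \<le> N i" for i j
      using Sn_zero_const[where X=X and q=q and N=N and NC=NC, OF h Sd0[unfolded S_def] that(1) that(2)] .
    define a where "a i j = dX i (q i j) \<bullet> omega_M gPhi N q clsd X i j" for i j
    define chi where "chi i r = (if i < NC \<and> r \<in> {0..1} then pl_interp (q i) (N i) (a i) r else 0)" for i r
    have chiW: "chi \<in> W"
    proof -
      have "extensional_net NC chi" unfolding extensional_net_def chi_def by auto
      moreover have "\<forall>i<NC. pw_affine (q i) (N i) (clsd i) (chi i)"
      proof (intro allI impI)
        fix i assume i: "i < NC"
        have per: "clsd i \<longrightarrow> a i 0 = a i (N i)"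
        proof
          assume cl: "clsd i"
          have Ni: "N i \<ge> 1" using P[OF i] unfolding part_def by simp
          have "X i (q i 0) = X i (q i (N i))"
            using pw_affineD(2)[OF pX[OF i]] cl P[OF i] unfolding part_def by simp
          then have "omega_M gPhi N q clsd X i 0 = omega_M gPhi N q clsd X i (N i)"
            by (rule omega_M_periodic[where clsd=clsd and i=i and N=N and X=X and q=q, OF cl Ni])
          moreover have "dX i (q i (N i)) = dX i (q i 0)" by (rule const[OF i]) simp
          ultimately show "a i 0 = a i (N i)" unfolding a_def by simp
        qed
        show "pw_affine (q i) (N i) (clsd i) (chi i)"
          by (rule pw_affine_cong[OF P[OF i] pl_interp_pw_affine[OF P[OF i] per]]) (simp add: chi_def i)
      qed
      ultimately show ?thesis unfolding W_def Wh_def by blast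
    qed
    have v2: "(0, chi) \<in> U" unfolding U_def using chiW subspace_0[OF subspace_VPhi] unfolding V_def by auto
    have "B u (0, chi) = L (\<lambda>i r. (dX i r /\<^sub>R tau) \<bullet> (chi i r *\<^sub>R om i r))"
      unfolding B_def E1_def E2_def w k0 S_def by (simp add: Lz Sn_zero2)
    then have L0: "L (\<lambda>i r. (dX i r /\<^sub>R tau) \<bullet> (chi i r *\<^sub>R om i r)) = 0" using u(2) v2 by auto
    have fnode: "(dX i (q i j) /\<^sub>R tau) \<bullet> (chi i (q i j) *\<^sub>R om i (q i j)) = (a i j * a i j) / tau"
      if "i < NC" "j \<le> N i" for i j
    proof -
      have "q i j \<in> {0..1}" using part_01[OF P[OF that(1)] that(2)] by auto
      then have "chi i (q i j) = a i j" unfolding chi_def using that pl_interp_node[OF P[OF that(1)] that(2)] by simp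
      moreover have "om i (q i j) = omega_M gPhi N q clsd X i j"
        unfolding om_def omega_M_fun_def using pl_interp_node[OF P[OF that(1)] that(2)] .
      ultimately show ?thesis unfolding a_def by (simp add: inner_commute divide_inverse)
    qed
    have anode: "a i j = 0" if "i < NC" "j \<le> N i" for i j
    proof -
      have "(dX i (q i j) /\<^sub>R tau) \<bullet> (chi i (q i j) *\<^sub>R om i (q i j)) = 0"
        using lumped_zero_nodes[where X=X and q=q and N=N and NC=NC, OF P h _ L0[unfolded L_def] that] fnode tau_pos by simp
      then have "a i j * a i j / tau = 0" unfolding fnode[OF that] .
      then show ?thesis using tau_pos by simp
    qed
    have pnode: "dX i (q i j) \<bullet> omega_Phi gPhi q X i j = 0" if "i < NC" "j \<le> N i" for i j
      using dV that unfolding V_def V_Phi_def by blast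
    have cM: "dX i (q i 0) \<bullet> omega_M gPhi N q clsd X i j = 0" if "i < NC" "j \<le> N i" for i j
      using anode[OF that] const[OF that] unfolding a_def by simp
    have cP: "dX i (q i 0) \<bullet> omega_Phi gPhi q X i j = 0" if "i < NC" "j \<le> N i" for i j
      using pnode[OF that] const[OF that] by simp
    have dVh: "dX \<in> Vh NC N q clsd NT ic rh" using dV unfolding V_def V_Phi_def by blast
    have junc: "\<forall>k<NT. dX (ic k 0) (rh k 0) = dX (ic k 1) (rh k 1) \<and> dX (ic k 1) (rh k 1) = dX (ic k 2) (rh k 2)"
      using dVh unfolding Vh_def by blast
    have netJ: "\<forall>k<NT. (\<forall>l<3. ic k l < NC \<and> \<not> clsd (ic k l) \<and> rh k l \<in> {0, 1}) \<and>
              ic k 0 \<noteq> ic k 1 \<and> ic k 0 \<noteq> ic k 2 \<and> ic k 1 \<noteq> ic k 2"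
      using conjunct1[OF conjunct2[OF net[unfolded network_def]]] .
    have netE: "\<forall>i<NC. \<not> clsd i \<longrightarrow> (\<forall>r\<in>{0::real, 1}. \<exists>k<NT. \<exists>l<3. ic k l = i \<and> rh k l = r)"
      using conjunct2[OF conjunct2[OF net[unfolded network_def]]] .
    have czero: "dX i (q i 0) = 0" if i: "i < NC" for i
    proof (cases "clsd i")
      case True
      have "dim (span (\<Union>j\<in>{1..N i}. {omega_M gPhi N q clsd X i j, omega_Phi gPhi q X i j})) = 3"
        using A1 i True unfolding assm_A1_def by blast
      then show ?thesis by (rule perp_span3) (use cM[OF i] cP[OF i] in auto)
    next
      case False
      obtain k l where k: "k < NT" "l < 3" "ic k l = i" "rh k l = 0"
        using netE i False by force
      have kl: "ic k l' < NC" "rh k l' \<in> {0, 1}" if "l' < 3" for l'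
        using netJ k(1) that by auto
      define wv where "wv = dX (ic k 0) (rh k 0)"
      have jw: "dX (ic k l') (rh k l') = wv" if "l' < 3" for l'
      proof -
        have "l' = 0 \<or> l' = 1 \<or> l' = 2" using that by auto
        then show ?thesis using junc k(1) unfolding wv_def by auto
      qed
      have endp: "dX (ic k l') (rh k l') = dX (ic k l') (q (ic k l') 0)" if "l' < 3" for l'
      proof -
        have Pi: "part (q (ic k l')) (N (ic k l'))" using P kl(1)[OF that] by blast
        show ?thesis
        proof (cases "rh k l' = 0")
          case True then show ?thesis using Pi unfolding part_def by simp
        next
          case False
          then have "rh k l' = 1" using kl(2)[OF that] by auto
          then have "rh k l' = q (ic k l') (N (ic k l'))" using Pi unfolding part_def by simp
          then show ?thesis using const[OF kl(1)[OF that], of "N (ic k l')"] by simp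
        qed
      qed
      have cw: "dX (ic k l') (q (ic k l') 0) = wv" if "l' < 3" for l'
        using jw[OF that] endp[OF that] by simp
      have "dim (span (\<Union>l<3. \<Union>j\<in>{1..<N (ic k l)}.
          {omega_M gPhi N q clsd X (ic k l) j, omega_Phi gPhi q X (ic k l) j})) = 3"
        using A2 k(1) unfolding assm_A2_def by blast
      then have "wv = 0"
      proof (rule perp_span3, intro ballI)
        fix x assume "x \<in> (\<Union>l<3. \<Union>j\<in>{1..<N (ic k l)}.
          {omega_M gPhi N q clsd X (ic k l) j, omega_Phi gPhi q X (ic k l) j})"
        then obtain l' j where lj: "l' < 3" "j \<in> {1..<N (ic k l')}"
          "x = omega_M gPhi N q clsd X (ic k l') j \<or> x = omega_Phi gPhi q X (ic k l') j" by blast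
        have "j \<le> N (ic k l')" using lj(2) by auto
        then show "wv \<bullet> x = 0" using lj(3) cM[OF kl(1)[OF lj(1)]] cP[OF kl(1)[OF lj(1)]] cw[OF lj(1)] by auto
      qed
      then show ?thesis using cw[OF k(2)] k(3) by simp
    qed
    have "dX = 0" by (rule nodal_zero[OF P Vext[OF dV] Vpw[OF dV]]) (use const czero in auto)
    then show ?thesis unfolding w k0 by (simp add: zero_prod_def)
  qed
  have ex1: "\<exists>!u. u \<in> U \<and> (\<forall>v\<in>U. B u v = l v)"
    by (rule abstract_solve[OF subU linE finH EH E0 B1 B2 ll nd])
  have equiv: "(case w of (dX, kappa) \<Rightarrow> dX \<in> V_Phi gPhi NC N q clsd NT ic rh X \<and> kappa \<in> Wh NC N q clsd \<and>
     (\<forall>chi\<in>Wh NC N q clsd.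
        lumped NC N q X (\<lambda>i r. (dX i r /\<^sub>R tau) \<bullet> (chi i r *\<^sub>R omega_M_fun gPhi N q clsd X i r))
        - sigma * lumped NC N q X (\<lambda>i r. kappa i r * chi i r)
        = lumped NC N q X (\<lambda>i r. F i r * chi i r)) \<and>
     (\<forall>eta\<in>V_Phi gPhi NC N q clsd NT ic rh X.
        lumped NC N q X (\<lambda>i r. (kappa i r *\<^sub>R omega_M_fun gPhi N q clsd X i r) \<bullet> eta i r)
        + l2m NC X (nabla_s X dX) (nabla_s X eta)
        = - l2m NC X (nabla_s X X) (nabla_s X eta))) \<longleftrightarrow> w \<in> U \<and> (\<forall>v\<in>U. B w v = l v)" for w
  proof -
    obtain dX kappa where w: "w = (dX, kappa)" by (cases w)
    have l2: "l2m NC X (nabla_s X u) (nabla_s X eta) = S u eta" if "u \<in> V \<or> u = X" "eta \<in> V" for u eta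
      unfolding S_def
    proof (rule l2m_Sn[OF net A pX])
      fix i assume "i < NC"
      then show "pw_affine (q i) (N i) (clsd i) (u i)" using that Vpw pX by blast
      show "pw_affine (q i) (N i) (clsd i) (eta i)" using that Vpw \<open>i < NC\<close> by blast
    qed
    show ?thesis
    proof
      assume H: "case w of (dX, kappa) \<Rightarrow> dX \<in> V_Phi gPhi NC N q clsd NT ic rh X \<and> kappa \<in> Wh NC N q clsd \<and>
     (\<forall>chi\<in>Wh NC N q clsd.
        lumped NC N q X (\<lambda>i r. (dX i r /\<^sub>R tau) \<bullet> (chi i r *\<^sub>R omega_M_fun gPhi N q clsd X i r))
        - sigma * lumped NC N q X (\<lambda>i r. kappa i r * chi i r)
        = lumped NC N q X (\<lambda>i r. F i r * chi i r)) \<and>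
     (\<forall>eta\<in>V_Phi gPhi NC N q clsd NT ic rh X.
        lumped NC N q X (\<lambda>i r. (kappa i r *\<^sub>R omega_M_fun gPhi N q clsd X i r) \<bullet> eta i r)
        + l2m NC X (nabla_s X dX) (nabla_s X eta)
        = - l2m NC X (nabla_s X X) (nabla_s X eta))"
      then have dV: "dX \<in> V" and kW: "kappa \<in> W" unfolding w V_def W_def by auto
      have eq1: "E1 dX kappa chi = L (\<lambda>i r. F i r * chi i r)" if "chi \<in> W" for chi
        using H that unfolding w E1_def L_def om_def W_def by auto
      have eq2: "E2 dX kappa eta = - S X eta" if "eta \<in> V" for eta
        using H that l2[OF _ that, of dX] l2[OF _ that, of X] dV unfolding w E2_def L_def om_def V_def by auto
      show "w \<in> U \<and> (\<forall>v\<in>U. B w v = l v)"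
      proof
        show "w \<in> U" unfolding w U_def using dV kW by auto
        show "\<forall>v\<in>U. B w v = l v"
        proof
          fix v assume "v \<in> U"
          then have "fst v \<in> V" "snd v \<in> W" unfolding U_def by auto
          then show "B w v = l v" unfolding B_def l_def w using eq1 eq2 by simp
        qed
      qed
    next
      assume H: "w \<in> U \<and> (\<forall>v\<in>U. B w v = l v)"
      then have dV: "dX \<in> V" and kW: "kappa \<in> W" unfolding w U_def by auto
      have z0V: "0 \<in> V" unfolding V_def using subspace_0[OF subspace_VPhi] .
      have z0W: "0 \<in> W" unfolding W_def using subspace_0[OF subspace_Wh] .
      have eq1: "E1 dX kappa chi = L (\<lambda>i r. F i r * chi i r)" if "chi \<in> W" for chi
      proof -
        have "(0, chi) \<in> U" unfolding U_def using z0V that by auto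
        then have "B w (0, chi) = l (0, chi)" using H by blast
        then show ?thesis unfolding B_def l_def w E2_def S_def by (simp add: Lz Sn_zero2)
      qed
      have eq2: "E2 dX kappa eta = - S X eta" if "eta \<in> V" for eta
      proof -
        have "(eta, 0) \<in> U" unfolding U_def using z0W that by auto
        then have "B w (eta, 0) = l (eta, 0)" using H by blast
        then show ?thesis unfolding B_def l_def w E1_def by (simp add: Lz)
      qed
      show "case w of (dX, kappa) \<Rightarrow> dX \<in> V_Phi gPhi NC N q clsd NT ic rh X \<and> kappa \<in> Wh NC N q clsd \<and>
     (\<forall>chi\<in>Wh NC N q clsd.
        lumped NC N q X (\<lambda>i r. (dX i r /\<^sub>R tau) \<bullet> (chi i r *\<^sub>R omega_M_fun gPhi N q clsd X i r))
        - sigma * lumped NC N q X (\<lambda>i r. kappa i r * chi i r)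
        = lumped NC N q X (\<lambda>i r. F i r * chi i r)) \<and>
     (\<forall>eta\<in>V_Phi gPhi NC N q clsd NT ic rh X.
        lumped NC N q X (\<lambda>i r. (kappa i r *\<^sub>R omega_M_fun gPhi N q clsd X i r) \<bullet> eta i r)
        + l2m NC X (nabla_s X dX) (nabla_s X eta)
        = - l2m NC X (nabla_s X X) (nabla_s X eta))"
        unfolding w using dV kW eq1 eq2 l2[OF _ , of dX] l2[of X] unfolding V_def W_def E1_def E2_def L_def om_def
        by auto
    qed
  qed
  show ?thesis unfolding equiv by (rule ex1)
qed

end
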